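(* Let $\mathbb{F}_q$ be a finite field, $n\ge1$, and $C\le\mathbb{F}_q^n$ a linear code. Suppose there exists a regular subgroup $G$ of $S_n$ having a coprime cyclic decomposition and such that $\langle G, C_{S_n}(G)\rangle\le\mathrm{PAut}(C)$. Then $C$ is a cyclic group code.
   Context: $\mathcal{B}=\{e_1,\dots,e_n\}$ is the standard basis of $\mathbb{F}_q^n$; $\sigma\in S_n$ acts by $\sigma(\sum a_ie_i)=\sum a_ie_{\sigma(i)}$ and $\mathrm{PAut}(C)=\{\sigma\in S_n:\sigma(C)=C\}$. A subgroup of $S_n$ is regular if it has order $n$ and acts transitively on $\{1,\dots,n\}$; $C_{S_n}(G)$ is the centralizer of $G$ in $S_n$. A finite group $G$ has a coprime cyclic decomposition if there exist cyclic subgroups $A,B\le G$ with $\gcd(|A|,|B|)=1$ and $G=AB=\{ab:a\in A,b\in B\}$. For a finite group $H$ of order $n$, $C$ is an $H$-code if there is a bijection $\phi:\mathcal{B}\to H$ whose $\mathbb{F}_q$-linear extension $\tilde\phi:\mathbb{F}_q^n\to\mathbb{F}_q[H]$ maps $C$ onto a two-sided ideal of $\mathbb{F}_q[H]$; $C$ is a cyclic group code if it is an $H$-code for some cyclic group $H$. *)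

theory Defs
  imports "HOL-Algebra.Sym_Groups" "HOL-Algebra.Elementary_Groups"
begin

text \<open>Vectors of F_q^n: functions on the index set {1..n}, zero outside.
  e_i corresponds to the indicator of i.\<close>
definition vecs :: "nat \<Rightarrow> (nat \<Rightarrow> 'a::zero) set" where
  "vecs n = {v. \<forall>i. i \<notin> {1..n} \<longrightarrow> v i = 0}"

definition linear_code :: "nat \<Rightarrow> (nat \<Rightarrow> 'a::field) set \<Rightarrow> bool" where
  "linear_code n C \<longleftrightarrow> C \<subseteq> vecs n \<and> (\<lambda>i. 0) \<in> C \<and>
     (\<forall>u\<in>C. \<forall>v\<in>C. (\<lambda>i. u i + v i) \<in> C) \<and> (\<forall>c. \<forall>v\<in>C. (\<lambda>i. c * v i) \<in> C)"

text \<open>sigma (sum a_i e_i) = sum a_i e_(sigma i), i.e. the new coordinate at sigma i is a_i.\<close>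
definition perm_act :: "(nat \<Rightarrow> nat) \<Rightarrow> (nat \<Rightarrow> 'a) \<Rightarrow> (nat \<Rightarrow> 'a)" where
  "perm_act \<sigma> v = (\<lambda>j. v (Hilbert_Choice.inv \<sigma> j))"

definition PAut :: "nat \<Rightarrow> (nat \<Rightarrow> 'a) set \<Rightarrow> (nat \<Rightarrow> nat) set" where
  "PAut n C = {\<sigma> \<in> carrier (sym_group n). perm_act \<sigma> ` C = C}"

definition regular_subgroup :: "nat \<Rightarrow> (nat \<Rightarrow> nat) set \<Rightarrow> bool" where
  "regular_subgroup n G \<longleftrightarrow> subgroup G (sym_group n) \<and> card G = n \<and>
     (\<forall>i\<in>{1..n}. \<forall>j\<in>{1..n}. \<exists>g\<in>G. g i = j)"

definition centralizer_Sn :: "nat \<Rightarrow> (nat \<Rightarrow> nat) set \<Rightarrow> (nat \<Rightarrow> nat) set" where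
  "centralizer_Sn n G = {\<sigma> \<in> carrier (sym_group n). \<forall>g\<in>G. \<sigma> \<circ> g = g \<circ> \<sigma>}"

definition coprime_cyclic_decomposition :: "('g, 'b) monoid_scheme \<Rightarrow> bool" where
  "coprime_cyclic_decomposition K \<longleftrightarrow>
     (\<exists>A B. subgroup A K \<and> subgroup B K \<and>
        cyclic_group (K\<lparr>carrier := A\<rparr>) \<and> cyclic_group (K\<lparr>carrier := B\<rparr>) \<and>
        coprime (card A) (card B) \<and>
        carrier K = {a \<otimes>\<^bsub>K\<^esub> b | a b. a \<in> A \<and> b \<in> B})"

definition group_alg :: "('h, 'b) monoid_scheme \<Rightarrow> ('h \<Rightarrow> 'a::field) set" where
  "group_alg H = {f. \<forall>x. x \<notin> carrier H \<longrightarrow> f x = 0}"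

definition conv :: "('h, 'b) monoid_scheme \<Rightarrow> ('h \<Rightarrow> 'a::field) \<Rightarrow> ('h \<Rightarrow> 'a) \<Rightarrow> ('h \<Rightarrow> 'a)" where
  "conv H f g = (\<lambda>h. if h \<in> carrier H
      then (\<Sum>x\<in>carrier H. f x * g (inv\<^bsub>H\<^esub> x \<otimes>\<^bsub>H\<^esub> h)) else 0)"

definition two_sided_ideal :: "('h, 'b) monoid_scheme \<Rightarrow> ('h \<Rightarrow> 'a::field) set \<Rightarrow> bool" where
  "two_sided_ideal H I \<longleftrightarrow> I \<subseteq> group_alg H \<and> (\<lambda>h. 0) \<in> I \<and>
     (\<forall>x\<in>I. \<forall>y\<in>I. (\<lambda>h. x h + y h) \<in> I) \<and> (\<forall>x\<in>I. (\<lambda>h. - x h) \<in> I) \<and>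
     (\<forall>f\<in>group_alg H. \<forall>x\<in>I. conv H f x \<in> I \<and> conv H x f \<in> I)"

text \<open>F_q-linear extension of phi : basis -> H (basis vector e_i identified with index i).\<close>
definition lin_ext :: "('h, 'b) monoid_scheme \<Rightarrow> nat \<Rightarrow> (nat \<Rightarrow> 'h) \<Rightarrow> (nat \<Rightarrow> 'a::zero) \<Rightarrow> ('h \<Rightarrow> 'a)" where
  "lin_ext H n \<phi> v = (\<lambda>h. if h \<in> carrier H then v (inv_into {1..n} \<phi> h) else 0)"

definition is_H_code :: "nat \<Rightarrow> ('h, 'b) monoid_scheme \<Rightarrow> (nat \<Rightarrow> 'a::field) set \<Rightarrow> bool" where
  "is_H_code n H C \<longleftrightarrow> group H \<and> card (carrier H) = n \<and>
     (\<exists>\<phi>. bij_betw \<phi> {1..n} (carrier H) \<and> two_sided_ideal H (lin_ext H n \<phi> ` C))"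

text \<open>Groups are taken up to isomorphism, realised with carrier in nat (every finite group is).\<close>
definition cyclic_group_code :: "nat \<Rightarrow> (nat \<Rightarrow> 'a::field) set \<Rightarrow> bool" where
  "cyclic_group_code n C \<longleftrightarrow> (\<exists>H :: nat monoid. cyclic_group H \<and> is_H_code n H C)"

end

theory Submission
  imports Defs "HOL-Algebra.Multiplicative_Group"
begin

definition Zn :: "nat \<Rightarrow> nat monoid" where
  "Zn n = \<lparr>carrier = {0..<n}, monoid.mult = (\<lambda>x y. (x + y) mod n), one = 0\<rparr>"

lemma Zn_simps [simp]: "carrier (Zn n) = {0..<n}" "x \<otimes>\<^bsub>Zn n\<^esub> y = (x + y) mod n"
  "\<one>\<^bsub>Zn n\<^esub> = 0"
  by (simp_all add: Zn_def)

lemma Zn_group: assumes "n \<ge> 1" shows "group (Zn n)"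
proof (rule groupI)
  fix x assume x: "x \<in> carrier (Zn n)"
  show "\<exists>y\<in>carrier (Zn n). y \<otimes>\<^bsub>Zn n\<^esub> x = \<one>\<^bsub>Zn n\<^esub>"
  proof (cases "x = 0")
    case True then show ?thesis using assms by (intro bexI[of _ 0]) auto
  next
    case False then show ?thesis using x by (intro bexI[of _ "n - x"]) auto
  qed
qed (use assms in \<open>auto simp: mod_add_left_eq mod_add_right_eq add.assoc\<close>)

lemma Zn_comm: assumes "n \<ge> 1" shows "comm_group (Zn n)"
  using Zn_group[OF assms]
  by (intro group.group_comm_groupI) (auto simp: add.commute)

lemma Zn_cyclic: assumes "n \<ge> 1" shows "cyclic_group (Zn n)"
proof -
  have "(\<lambda>i::int. nat (i mod int n)) \<in> epi integer_group (Zn n)"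
  proof -
    have "nat ((x + y) mod int n) = (nat (x mod int n) + nat (y mod int n)) mod n" for x y
    proof -
      have X0: "0 \<le> x mod int n" and Y0: "0 \<le> y mod int n" using assms by simp_all
      have "int ((nat (x mod int n) + nat (y mod int n)) mod n) = (x mod int n + y mod int n) mod int n"
        using X0 Y0 by (simp add: of_nat_mod)
      also have "\<dots> = (x + y) mod int n" by (simp add: mod_add_eq)
      finally show ?thesis by (metis nat_int)
    qed
    moreover have "y \<in> (\<lambda>i::int. nat (i mod int n)) ` UNIV" if "y < n" for y
      using that by (intro image_eqI[of _ _ "int y"]) auto
    moreover have "nat (x mod int n) < n" for x using assms
      by (simp add: nat_less_iff)
    ultimately show ?thesis
      by (auto simp: epi_def hom_def)
  qed
  then show ?thesis
    using group.cyclic_group_epimorphic_image[OF group_integer_group _ cyclic_integer_group Zn_group[OF assms]]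
    by blast
qed


lemma lc_sum:
  assumes lc: "linear_code n C" and fin: "finite I" and u: "\<forall>x\<in>I. u x \<in> C"
  shows "(\<lambda>i. \<Sum>x\<in>I. c x * u x i) \<in> C"
  using fin u
proof (induction I rule: finite_induct)
  case empty then show ?case using lc by (simp add: linear_code_def)
next
  case (insert x F)
  have a: "(\<lambda>i. c x * u x i) \<in> C" using lc insert by (simp add: linear_code_def)
  have b: "(\<lambda>i. \<Sum>x\<in>F. c x * u x i) \<in> C" using insert by simp
  show ?case using lc a b insert(1,2) unfolding linear_code_def
    by (simp add: sum.insert)
qed

lemma conv_comm:
  assumes "comm_group H"
  shows "conv H f g = conv H g f"
proof (rule ext)
  fix h
  interpret comm_group H by fact
  show "conv H f g h = conv H g f h"
  proof (cases "h \<in> carrier H")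
    case False then show ?thesis by (simp add: conv_def)
  next
    case True
    have "(\<Sum>x\<in>carrier H. f x * g (inv\<^bsub>H\<^esub> x \<otimes>\<^bsub>H\<^esub> h))
        = (\<Sum>y\<in>carrier H. g y * f (inv\<^bsub>H\<^esub> y \<otimes>\<^bsub>H\<^esub> h))"
    proof (rule sum.reindex_bij_witness[where i = "\<lambda>x. inv\<^bsub>H\<^esub> x \<otimes>\<^bsub>H\<^esub> h" and j = "\<lambda>x. inv\<^bsub>H\<^esub> x \<otimes>\<^bsub>H\<^esub> h"])
      fix a assume a: "a \<in> carrier H"
      have e: "inv\<^bsub>H\<^esub> (inv\<^bsub>H\<^esub> a \<otimes>\<^bsub>H\<^esub> h) \<otimes>\<^bsub>H\<^esub> h = a" using a True
        by (simp add: inv_mult m_assoc m_comm m_lcomm)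
      show "inv\<^bsub>H\<^esub> (inv\<^bsub>H\<^esub> a \<otimes>\<^bsub>H\<^esub> h) \<otimes>\<^bsub>H\<^esub> h = a" by (rule e)
      show "inv\<^bsub>H\<^esub> a \<otimes>\<^bsub>H\<^esub> h \<in> carrier H" using a True by simp
      show "g (inv\<^bsub>H\<^esub> a \<otimes>\<^bsub>H\<^esub> h) * f (inv\<^bsub>H\<^esub> (inv\<^bsub>H\<^esub> a \<otimes>\<^bsub>H\<^esub> h) \<otimes>\<^bsub>H\<^esub> h) = f a * g (inv\<^bsub>H\<^esub> a \<otimes>\<^bsub>H\<^esub> h)"
        using e by (simp add: mult.commute)
    next
      fix b assume b: "b \<in> carrier H"
      show "inv\<^bsub>H\<^esub> (inv\<^bsub>H\<^esub> b \<otimes>\<^bsub>H\<^esub> h) \<otimes>\<^bsub>H\<^esub> h = b" using b True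
        by (simp add: inv_mult m_assoc m_comm m_lcomm)
      show "inv\<^bsub>H\<^esub> b \<otimes>\<^bsub>H\<^esub> h \<in> carrier H" using b True by simp
    qed
    then show ?thesis using True by (simp add: conv_def)
  qed
qed

lemma code_from_sigma:
  fixes C :: "(nat \<Rightarrow> 'a::field) set"
  assumes n: "n \<ge> 1" and lc: "linear_code n C" and sp: "\<sigma> permutes {1..n}"
   and pa: "perm_act \<sigma> ` C = C" and inj: "inj_on (\<lambda>m. (\<sigma>^^m) 1) {0..<n}"
  shows "cyclic_group_code n C"
proof -
  define \<psi> where "\<psi> = (\<lambda>m. (\<sigma>^^m) 1)"
  have inj\<psi>: "inj_on \<psi> {0..<n}" using inj by (simp add: \<psi>_def)
  have sp_pow: "(\<sigma>^^m) permutes {1..n}" for m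
    using sp by (induction m) (auto simp: permutes_id permutes_compose)
  have inr: "(\<sigma>^^m) 1 \<in> {1..n}" for m
    using permutes_in_image[OF sp_pow[of m], of 1] n by auto
  have im: "\<psi> ` {0..<n} = {1..n}"
  proof -
    have "\<psi> ` {0..<n} \<subseteq> {1..n}"
      using inr by (auto simp: \<psi>_def)
    moreover have "card (\<psi> ` {0..<n}) = card {1..n}" using card_image[OF inj\<psi>] by simp
    ultimately show ?thesis by (simp add: card_subset_eq)
  qed
  have bij\<psi>: "bij_betw \<psi> {0..<n} {1..n}" using inj\<psi> im by (simp add: bij_betw_def)
  have injs: "inj \<sigma>" using sp by (simp add: permutes_inj)
  have per: "\<psi> n = 1"
  proof -
    have "\<psi> n \<in> {1..n}" using inr by (auto simp: \<psi>_def)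
    then obtain j where j: "j < n" "\<psi> n = \<psi> j" using im by (metis atLeastLessThan_iff imageE)
    show ?thesis
    proof (cases j)
      case 0
      have "\<psi> 0 = 1" by (simp add: \<psi>_def)
      then show ?thesis using j(2) 0 by simp
    next
      case (Suc j')
      have psiS: "\<psi> (Suc m) = \<sigma> (\<psi> m)" for m by (simp add: \<psi>_def)
      have nn: "n = Suc (n - 1)" using n by simp
      have "\<sigma> (\<psi> (n - 1)) = \<psi> n" using psiS[of "n - 1"] nn by simp
      also have "\<dots> = \<psi> (Suc j')" using j(2) Suc by simp
      also have "\<dots> = \<sigma> (\<psi> j')" by (rule psiS)
      finally have "\<sigma> (\<psi> (n - 1)) = \<sigma> (\<psi> j')" .
      then have "\<psi> (n - 1) = \<psi> j'" by (rule injD[OF injs])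
      moreover have "n - 1 \<in> {0..<n}" "j' \<in> {0..<n}" using j Suc n by auto
      ultimately have "n - 1 = j'" by (rule inj_onD[OF inj\<psi>])
      then show ?thesis using j Suc n by simp
    qed
  qed
  have permul: "(\<sigma>^^(n*t)) 1 = 1" for t
  proof (induction t)
    case (Suc t)
    have e: "n * Suc t = n*t + n" by simp
    have "(\<sigma>^^(n * Suc t)) 1 = (\<sigma>^^(n*t)) ((\<sigma>^^n) 1)"
      unfolding e funpow_add by simp
    also have "(\<sigma>^^n) 1 = 1" using per by (simp add: \<psi>_def)
    finally show ?case using Suc.IH by simp
  qed simp
  have permod: "\<psi> j = \<psi> (j mod n)" for j
  proof -
    have a1: "(\<sigma>^^(j mod n + n*(j div n))) 1 = (\<sigma>^^(j mod n)) ((\<sigma>^^(n*(j div n))) 1)"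
      by (simp only: funpow_add comp_apply)
    have "\<psi> j = (\<sigma>^^(j mod n)) ((\<sigma>^^(n * (j div n))) 1)"
      using a1 by (simp only: mod_mult_div_eq \<psi>_def)
    then show ?thesis using permul[of "j div n"] by (simp add: \<psi>_def)
  qed
  have shift: "\<psi> ((h + m) mod n) = (\<sigma>^^m) (\<psi> h)" for h m
  proof -
    have "\<psi> ((h + m) mod n) = \<psi> (m + h)" using permod[of "h+m"] by (simp only: add.commute)
    also have "\<dots> = (\<sigma>^^m) (\<psi> h)" by (simp only: \<psi>_def funpow_add comp_apply)
    finally show ?thesis .
  qed
  have closed1: "(\<lambda>i. v (\<sigma> i)) \<in> C" if "v \<in> C" for v
  proof -
    have "v \<in> perm_act \<sigma> ` C" using that pa by simp
    then obtain w where w: "w \<in> C" "v = perm_act \<sigma> w" by (rule imageE)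
    have "(\<lambda>i. v (\<sigma> i)) = w" using w(2) by (simp add: perm_act_def inv_f_f[OF injs])
    then show ?thesis using w by simp
  qed
  have closedm: "(\<lambda>i. v ((\<sigma>^^m) i)) \<in> C" if "v \<in> C" for v m
  proof (induction m)
    case 0 then show ?case using that by simp
  next
    case (Suc m)
    from closed1[OF Suc] show ?case by (simp add: funpow_swap1)
  qed
  define \<phi> where "\<phi> = inv_into {0..<n} \<psi>"
  have bij\<phi>: "bij_betw \<phi> {1..n} (carrier (Zn n))"
    using bij_betw_inv_into[OF bij\<psi>] by (simp add: \<phi>_def)
  define E where "E = (\<lambda>v::nat \<Rightarrow> 'a. \<lambda>h. if h < n then v (\<psi> h) else 0)"
  have le: "lin_ext (Zn n) n \<phi> v = E v" for v :: "nat \<Rightarrow> 'a"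
  proof (rule ext)
    fix h
    show "lin_ext (Zn n) n \<phi> v h = E v h"
    proof (cases "h < n")
      case True
      then have "h \<in> {0..<n}" by simp
      from inv_into_inv_into_eq[OF bij\<psi> this] have iv: "inv_into {1..n} \<phi> h = \<psi> h"
        by (simp only: \<phi>_def)
      show ?thesis using True iv by (simp add: lin_ext_def E_def)
    next
      case False then show ?thesis by (simp add: lin_ext_def E_def)
    qed
  qed
  have imgE: "lin_ext (Zn n) n \<phi> ` C = E ` C" using le by (simp add: image_def)
  have G: "group (Zn n)" using Zn_group[OF n] .
  interpret Zg: group "Zn n" by (rule G)
  have convE: "conv (Zn n) f (E v) \<in> E ` C" if v: "v \<in> C" for f v
  proof -
    define w where "w = (\<lambda>i. \<Sum>x\<in>{0..<n}. f x * (\<lambda>i. v ((\<sigma>^^(inv\<^bsub>Zn n\<^esub> x)) i)) i)"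
    have "w \<in> C" unfolding w_def
      by (rule lc_sum[OF lc]) (use closedm[OF v] in auto)
    moreover have "conv (Zn n) f (E v) = E w"
    proof (rule ext)
      fix h
      show "conv (Zn n) f (E v) h = E w h"
      proof (cases "h < n")
        case False then show ?thesis by (simp add: conv_def E_def)
      next
        case True
        have sh: "v (\<psi> ((inv\<^bsub>Zn n\<^esub> x + h) mod n)) = v ((\<sigma>^^(inv\<^bsub>Zn n\<^esub> x)) (\<psi> h))" for x
          using shift[of h "inv\<^bsub>Zn n\<^esub> x"] by (simp add: add.commute)
        show ?thesis using True n
          by (simp add: conv_def E_def w_def sh)
      qed
    qed
    ultimately show ?thesis by blast
  qed
  have ideal: "two_sided_ideal (Zn n) (E ` C)"
    unfolding two_sided_ideal_def
  proof (intro conjI ballI)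
    show "E ` C \<subseteq> group_alg (Zn n)" by (auto simp: group_alg_def E_def)
    have "(\<lambda>i. 0) \<in> C" using lc by (simp add: linear_code_def)
    moreover have "E (\<lambda>i. 0) = (\<lambda>h. 0)" by (auto simp: E_def)
    ultimately show "(\<lambda>h. 0) \<in> E ` C" by (metis image_eqI)
  next
    fix x y assume "x \<in> E ` C" "y \<in> E ` C"
    then obtain u v where uv: "u \<in> C" "v \<in> C" "x = E u" "y = E v" by blast
    have "(\<lambda>i. u i + v i) \<in> C" using lc uv by (simp add: linear_code_def)
    moreover have "(\<lambda>h. x h + y h) = E (\<lambda>i. u i + v i)" using uv by (auto simp: E_def)
    ultimately show "(\<lambda>h. x h + y h) \<in> E ` C" by blast
  next
    fix x assume "x \<in> E ` C"
    then obtain u where u: "u \<in> C" "x = E u" by blast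
    have "(\<lambda>i. (-1) * u i) \<in> C" using lc u unfolding linear_code_def by blast
    moreover have "(\<lambda>h. - x h) = E (\<lambda>i. (-1) * u i)" using u by (auto simp: E_def)
    ultimately show "(\<lambda>h. - x h) \<in> E ` C" by blast
  next
    fix f :: "nat \<Rightarrow> 'a" and x assume "f \<in> group_alg (Zn n)" "x \<in> E ` C"
    then obtain u where u: "u \<in> C" "x = E u" by blast
    show "conv (Zn n) f x \<in> E ` C"
      using convE[OF u(1), of f] u(2) by simp
  next
    fix f :: "nat \<Rightarrow> 'a" and x assume "f \<in> group_alg (Zn n)" "x \<in> E ` C"
    then obtain u where u: "u \<in> C" "x = E u" by blast
    have "conv (Zn n) x f = conv (Zn n) f x" by (rule conv_comm[OF Zn_comm[OF n]])
    then show "conv (Zn n) x f \<in> E ` C"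
      using convE[OF u(1), of f] u(2) by simp
  qed
  have "is_H_code n (Zn n) C"
    unfolding is_H_code_def using G bij\<phi> ideal imgE by auto
  then show ?thesis unfolding cyclic_group_code_def using Zn_cyclic[OF n] by blast
qed


lemma pow_symX: "x [^]\<^bsub>(sym_group n)\<lparr>carrier := X\<rparr>\<^esub> (k::nat) = x ^^ k"
  by (induction k) (simp_all add: sym_group_def funpow_swap1)

lemma pow_sym: "x [^]\<^bsub>sym_group n\<^esub> (k::nat) = x ^^ k"
  by (induction k) (simp_all add: sym_group_def funpow_swap1)

lemma cyc_facts:
  assumes G: "subgroup G (sym_group n)" and A: "subgroup A ((sym_group n)\<lparr>carrier := G\<rparr>)"
    and cyc: "cyclic_group ((sym_group n)\<lparr>carrier := G\<rparr>\<lparr>carrier := A\<rparr>)" and fin: "finite A"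
  shows "\<exists>a\<in>A. \<forall>d. a^^d = id \<longrightarrow> card A dvd d"
    and "\<forall>c\<in>A. c^^(card A) = id"
    and "\<forall>c\<in>A. \<forall>k. c^^k \<in> A"
proof -
  have K: "group ((sym_group n)\<lparr>carrier := G\<rparr>)"
    by (rule subgroup.subgroup_is_group[OF G sym_group_is_group])
  have Ka: "group ((sym_group n)\<lparr>carrier := A\<rparr>)"
    using subgroup.subgroup_is_group[OF A K] by simp
  have cyc': "cyclic_group ((sym_group n)\<lparr>carrier := A\<rparr>)" using cyc by simp
  interpret Ka: group "(sym_group n)\<lparr>carrier := A\<rparr>" by (rule Ka)
  obtain a where a: "a \<in> A" "subgroup_generated ((sym_group n)\<lparr>carrier := A\<rparr>) {a} = (sym_group n)\<lparr>carrier := A\<rparr>"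
    using cyc' unfolding cyclic_group_def by auto
  have orda: "group.ord ((sym_group n)\<lparr>carrier := A\<rparr>) a = card A"
    using Ka.cyclic_order_is_ord[of a] a by (simp add: order_def)
  show "\<exists>a\<in>A. \<forall>d. a^^d = id \<longrightarrow> card A dvd d"
    using a(1) Ka.pow_eq_id[of a, unfolded pow_symX] orda by (auto simp: sym_group_one)
  show "\<forall>c\<in>A. c^^(card A) = id"
    using Ka.pow_order_eq_1[unfolded pow_symX] by (auto simp: sym_group_one order_def)
  show "\<forall>c\<in>A. \<forall>k. c^^k \<in> A"
    using Ka.nat_pow_closed by (auto simp: pow_symX)
qed


theorem theorem3p1:
  fixes C :: "(nat \<Rightarrow> 'a::{field,finite}) set" and n :: nat
  assumes "n \<ge> 1"
    and "linear_code n C"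
    and "\<exists>G. regular_subgroup n G \<and>
           coprime_cyclic_decomposition ((sym_group n)\<lparr>carrier := G\<rparr>) \<and>
           generate (sym_group n) (G \<union> centralizer_Sn n G) \<subseteq> PAut n C"
  shows "cyclic_group_code n C"
proof -
  note n = assms(1)
  obtain G where reg: "regular_subgroup n G"
    and ccd: "coprime_cyclic_decomposition ((sym_group n)\<lparr>carrier := G\<rparr>)"
    and gen: "generate (sym_group n) (G \<union> centralizer_Sn n G) \<subseteq> PAut n C"
    using assms(3) by blast
  have sgG: "subgroup G (sym_group n)" and cardG: "card G = n"
    and trans: "\<forall>i\<in>{1..n}. \<forall>j\<in>{1..n}. \<exists>g\<in>G. g i = j"
    using reg by (auto simp: regular_subgroup_def)
  obtain A B where sA: "subgroup A ((sym_group n)\<lparr>carrier := G\<rparr>)"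
    and sB: "subgroup B ((sym_group n)\<lparr>carrier := G\<rparr>)"
    and cA: "cyclic_group ((sym_group n)\<lparr>carrier := G\<rparr>\<lparr>carrier := A\<rparr>)"
    and cB: "cyclic_group ((sym_group n)\<lparr>carrier := G\<rparr>\<lparr>carrier := B\<rparr>)"
    and cop: "coprime (card A) (card B)"
    and AB: "G = {x \<circ> y | x y. x \<in> A \<and> y \<in> B}"
    using ccd unfolding coprime_cyclic_decomposition_def by (auto simp: sym_group_mult)
  have finG: "finite G" using cardG n by (metis card.infinite not_one_le_zero)
  have AG: "A \<subseteq> G" using subgroup.subset[OF sA] by simp
  have BG: "B \<subseteq> G" using subgroup.subset[OF sB] by simp
  have finA: "finite A" using AG finG finite_subset by blast
  have finB: "finite B" using BG finG finite_subset by blast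
  define p where "p = card A"
  define q where "q = card B"
  obtain a where a: "a \<in> A" "\<forall>d. a^^d = id \<longrightarrow> p dvd d"
    using cyc_facts(1)[OF sgG sA cA finA] p_def by blast
  obtain b where b: "b \<in> B" "\<forall>d. b^^d = id \<longrightarrow> q dvd d"
    using cyc_facts(1)[OF sgG sB cB finB] q_def by blast
  have Apow: "\<forall>c\<in>A. c^^p = id" and Bpow: "\<forall>c\<in>B. c^^q = id"
    using cyc_facts(2)[OF sgG sA cA finA] cyc_facts(2)[OF sgG sB cB finB] p_def q_def by auto
  have Bcl: "\<forall>c\<in>B. \<forall>k. c^^k \<in> B"
    using cyc_facts(3)[OF sgG sB cB finB] by auto
  have Acl: "\<forall>c\<in>A. \<forall>k. c^^k \<in> A"
    using cyc_facts(3)[OF sgG sA cA finA] by auto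
  have idB: "id \<in> B" using subgroup.one_closed[OF sB] by (simp add: sym_group_one)
  have q1: "q \<ge> 1" using idB finB q_def by (metis card_0_eq empty_iff less_one not_le)
  have nle: "n \<le> p * q"
  proof -
    have "G = (\<lambda>(x, y). x \<circ> y) ` (A \<times> B)" using AB by auto
    then have "card G \<le> card (A \<times> B)" by (metis card_image_le finA finB finite_cartesian_product)
    then show ?thesis using cardG by (simp add: card_cartesian_product p_def q_def)
  qed
  have perm: "g permutes {1..n}" if "g \<in> G" for g
    using subgroup.subset[OF sgG] that by (auto simp: sym_group_carrier)
  have permin: "g x \<in> {1..n}" if "g \<in> G" "x \<in> {1..n}" for g x
    using permutes_in_image[OF perm[OF that(1)]] that(2) by simp
  have one1: "(1::nat) \<in> {1..n}" using n by simp
  have gcl: "g \<circ> h \<in> G" if "g \<in> G" "h \<in> G" for g h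
    using subgroup.m_closed[OF sgG that] by (simp add: sym_group_mult)
  have gpow: "g^^k \<in> G" if "g \<in> G" for g k
  proof (induction k)
    case 0 then show ?case using subgroup.one_closed[OF sgG] by (simp add: sym_group_one id_def)
  next
    case (Suc k) then show ?case using gcl[OF that Suc] by (metis funpow.simps(2))
  qed
  have aG: "a \<in> G" and bG: "b \<in> G" using a b AG BG by auto
  define ev where "ev = (\<lambda>g::nat\<Rightarrow>nat. g 1)"
  have evim: "ev ` G = {1..n}"
  proof
    show "ev ` G \<subseteq> {1..n}" using permin one1 by (auto simp: ev_def)
    show "{1..n} \<subseteq> ev ` G"
    proof
      fix j assume j: "j \<in> {1..n}"
      then obtain g where "g \<in> G" "g 1 = j" using trans one1 by blast
      then show "j \<in> ev ` G" by (auto simp: ev_def)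
    qed
  qed
  have evinj: "inj_on ev G"
    by (rule eq_card_imp_inj_on[OF finG]) (simp add: evim cardG)
  have cancel: "g = h" if "g \<in> G" "h \<in> G" "k \<in> G" "g (k 1) = h (k 1)" for g h k
  proof -
    have "g \<circ> k = h \<circ> k" using inj_onD[OF evinj, of "g \<circ> k" "h \<circ> k"] gcl that by (simp add: ev_def)
    moreover have "surj k" using perm[OF that(3)] by (simp add: permutes_surj)
    ultimately show ?thesis
    proof -
      assume gk: "g \<circ> k = h \<circ> k" and sk: "surj k"
      show ?thesis
      proof (rule ext)
        fix x obtain y where "x = k y" using sk by (metis surjD)
        then show "g x = h x" using fun_cong[OF gk, of y] by simp
      qed
    qed
  qed
  define gi where "gi = inv_into G ev"
  have gi1: "gi i \<in> G" "gi i 1 = i" if "i \<in> {1..n}" for i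
    using that evim inv_into_into[of i ev G] f_inv_into_f[of i ev G] by (auto simp: gi_def ev_def)
  have gi2: "gi (g 1) = g" if "g \<in> G" for g
    using inv_into_f_f[OF evinj that] by (simp add: gi_def ev_def)
  define \<rho> where "\<rho> = (\<lambda>i. if i \<in> {1..n} then gi i (b 1) else i)"
  have \<rho>in: "\<rho> i \<in> {1..n}" if "i \<in> {1..n}" for i
  proof -
    have "(gi i \<circ> b) 1 \<in> {1..n}" using permin[OF gcl[OF gi1(1)[OF that] bG] one1] .
    then show ?thesis using that by (simp add: \<rho>_def)
  qed
  have \<rho>inj: "inj_on \<rho> {1..n}"
  proof (rule inj_onI)
    fix i j assume ij: "i \<in> {1..n}" "j \<in> {1..n}" "\<rho> i = \<rho> j"
    then have "gi i = gi j" using cancel[OF gi1(1)[OF ij(1)] gi1(1)[OF ij(2)] bG] by (simp add: \<rho>_def)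
    then show "i = j" using gi1(2)[OF ij(1)] gi1(2)[OF ij(2)] by simp
  qed
  have \<rho>perm: "\<rho> permutes {1..n}"
  proof (rule bij_imp_permutes)
    show "bij_betw \<rho> {1..n} {1..n}"
    proof -
      have "\<rho> ` {1..n} \<subseteq> {1..n}" using \<rho>in by blast
      then show ?thesis using \<rho>inj endo_inj_surj[of "{1..n}" \<rho>] by (simp add: bij_betw_def)
    qed
  qed (auto simp: \<rho>_def)
  have \<rho>comm: "\<rho> \<circ> g = g \<circ> \<rho>" if g: "g \<in> G" for g
  proof (rule ext)
    fix x
    show "(\<rho> \<circ> g) x = (g \<circ> \<rho>) x"
    proof (cases "x \<in> {1..n}")
      case True
      have gx: "g x \<in> {1..n}" using permin[OF g True] .
      have "gi (g x) = g \<circ> gi x"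
        using gi2[OF gcl[OF g gi1(1)[OF True]]] gi1(2)[OF True] by simp
      moreover have "\<rho> (g x) = gi (g x) (b 1)" using gx by (simp add: \<rho>_def)
      moreover have "\<rho> x = gi x (b 1)" using True by (simp add: \<rho>_def)
      ultimately show ?thesis by simp
    next
      case False
      then have gx: "g x = x" using perm[OF g] by (simp add: permutes_not_in)
      have rx: "\<rho> x = x" using False by (auto simp: \<rho>_def)
      show ?thesis using gx rx by simp
    qed
  qed
  have \<rho>cent: "\<rho> \<in> centralizer_Sn n G"
    unfolding centralizer_Sn_def sym_group_carrier using \<rho>perm \<rho>comm by blast
  define \<sigma> where "\<sigma> = a \<circ> \<rho>"
  have "\<sigma> \<in> generate (sym_group n) (G \<union> centralizer_Sn n G)"
    using generate.eng[OF generate.incl generate.incl, of a "G \<union> centralizer_Sn n G" \<rho> "sym_group n"]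
      aG \<rho>cent by (simp add: \<sigma>_def sym_group_mult)
  then have \<sigma>P: "\<sigma> \<in> PAut n C" using gen by blast
  then have \<sigma>perm: "\<sigma> permutes {1..n}" and \<sigma>act: "perm_act \<sigma> ` C = C"
    by (auto simp: PAut_def sym_group_carrier)
  have \<sigma>pow: "\<sigma>^^m = a^^m \<circ> \<rho>^^m" for m
  proof (induction m)
    case (Suc m)
    have c: "\<rho> ((a^^m) x) = (a^^m) (\<rho> x)" for x using fun_cong[OF \<rho>comm[OF gpow[OF aG, of m]], of x] by simp
    show ?case
    proof (rule ext)
      fix x
      have "(\<sigma>^^Suc m) x = \<sigma> ((\<sigma>^^m) x)" by simp
      also have "\<dots> = \<sigma> ((a^^m \<circ> \<rho>^^m) x)" using Suc by simp
      also have "\<dots> = (a^^Suc m \<circ> \<rho>^^Suc m) x" by (simp add: \<sigma>_def c)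
      finally show "(\<sigma>^^Suc m) x = (a^^Suc m \<circ> \<rho>^^Suc m) x" .
    qed
  qed simp
  have \<rho>pow: "(\<rho>^^m) 1 = (b^^m) 1" for m
  proof (induction m)
    case (Suc m)
    have bm: "(b^^m) 1 \<in> {1..n}" using permin[OF gpow[OF bG] one1] .
    have "(\<rho>^^Suc m) 1 = gi ((b^^m) 1) (b 1)" using Suc bm by (simp add: \<rho>_def)
    also have "\<dots> = (b^^m) (b 1)" using gi2[OF gpow[OF bG]] by simp
    also have "\<dots> = (b^^Suc m) 1" by (simp add: funpow_swap1)
    finally show ?case .
  qed simp
  have \<psi>: "(\<sigma>^^m) 1 = (a^^m \<circ> b^^m) 1" for m
    using \<sigma>pow \<rho>pow by simp
  have noteq: "(\<sigma>^^k) 1 \<noteq> (\<sigma>^^l) 1" if kl: "k < l" "l < n" for k l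
  proof
    assume asm: "(\<sigma>^^k) 1 = (\<sigma>^^l) 1"
    have G1: "a^^k \<circ> b^^k \<in> G" by (rule gcl[OF gpow[OF aG] gpow[OF bG]])
    have G2: "a^^l \<circ> b^^l \<in> G" by (rule gcl[OF gpow[OF aG] gpow[OF bG]])
    have idG: "id \<in> G" using subgroup.one_closed[OF sgG] by (simp add: sym_group_one)
    from asm have e0: "(a^^k \<circ> b^^k) 1 = (a^^l \<circ> b^^l) 1" by (simp only: \<psi>)
    have e: "a^^k \<circ> b^^k = a^^l \<circ> b^^l"
      by (rule cancel[OF G1 G2 idG]) (simp only: id_apply e0)
    define d where "d = l - k"
    have l: "l = k + d" and d0: "d > 0" using kl by (auto simp: d_def)
    have injak: "inj (a^^k)" using permutes_inj[OF perm[OF gpow[OF aG, of k]]] .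
    have surjbk: "surj (b^^k)" using permutes_surj[OF perm[OF gpow[OF bG, of k]]] .
    have idc: "a^^d \<circ> b^^d = id"
    proof (rule ext)
      fix x
      obtain y where y: "x = (b^^k) y" using surjbk by (metis surjD)
      have "(a^^k) ((b^^k) y) = (a^^k) ((a^^d) ((b^^d) ((b^^k) y)))"
      proof -
        have al: "a^^l = a^^k \<circ> a^^d" using funpow_add[of k d a] l by simp
        have bl: "b^^l = b^^d \<circ> b^^k" using funpow_add[of d k b] l by (simp add: add.commute)
        show ?thesis using fun_cong[OF e, of y] unfolding al bl by simp
      qed
      then have "(b^^k) y = (a^^d) ((b^^d) ((b^^k) y))" using injak by (simp add: inj_eq)
      then show "(a^^d \<circ> b^^d) x = id x" using y by simp
    qed
    define c where "c = a^^d"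
    have cA: "c \<in> A" using Acl a by (simp add: c_def)
    have "c = c \<circ> (b^^d)^^q" using Bpow Bcl b by simp
    also have "\<dots> = c \<circ> (b^^d) \<circ> (b^^d)^^(q - 1)"
    proof -
      obtain q' where "q = Suc q'" using q1 by (cases q) auto
      then show ?thesis by (simp add: comp_assoc)
    qed
    also have "\<dots> = (b^^d)^^(q - 1)" using idc by (simp add: c_def)
    finally have cB: "c \<in> B" using Bcl b by simp
    have cS: "c \<in> carrier (sym_group n)" using cA AG perm by (auto simp: sym_group_carrier)
    interpret S: group "sym_group n" by (rule sym_group_is_group)
    have "S.ord c dvd p" using S.pow_eq_id[OF cS, of p] Apow cA by (simp add: pow_sym sym_group_one)
    moreover have "S.ord c dvd q" using S.pow_eq_id[OF cS, of q] Bpow cB by (simp add: pow_sym sym_group_one)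
    ultimately have "is_unit (S.ord c)" using cop p_def q_def
      by (intro coprime_common_divisor[of p q]) auto
    then have "S.ord c dvd 1" by simp
    then have c1: "c = id" using S.pow_eq_id[OF cS, of 1, unfolded pow_sym] by (simp add: sym_group_one)
    then have "p dvd d" using a c_def by simp
    moreover have "b^^d = id" using idc c1 c_def by simp
    then have "q dvd d" using b by simp
    ultimately have "p * q dvd d" using cop p_def q_def by (simp add: divides_mult)
    then have "p * q \<le> d" using d0 by (simp add: dvd_imp_le)
    then show False using nle kl d_def by simp
  qed
  have inj: "inj_on (\<lambda>m. (\<sigma>^^m) 1) {0..<n}"
  proof (rule inj_onI)
    fix k l assume "k \<in> {0..<n}" "l \<in> {0..<n}" "(\<sigma>^^k) 1 = (\<sigma>^^l) 1"
    then show "k = l" using noteq by (metis atLeastLessThan_iff linorder_neqE_nat)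
  qed
  show ?thesis by (rule code_from_sigma[OF n assms(2) \<sigma>perm \<sigma>act inj])
qed

end
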